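(* Let $-1$ denote the automorphism of $\mathcal A_\theta^{alg}$ with $U_1\mapsto U_1^{-1}$, $U_2\mapsto U_2^{-1}$, and let $H^0(\mathcal A_\theta^{alg},{}_{-1}\mathcal A_\theta^{alg\ast})$ be the space of formal series $\varphi=\sum\varphi_{n,m}U_1^nU_2^m$ with $((-1)\cdot a)\varphi=\varphi a$ for all $a\in\mathcal A_\theta^{alg}$. Let $\mathbb Z_6$ be generated by the automorphism $-\omega$ with $U_1\mapsto U_2$, $U_2\mapsto\lambda^{-1/2}U_1^{-1}U_2$, acting termwise on this space. Then $H^0(\mathcal A_\theta^{alg},{}_{-1}\mathcal A_\theta^{alg\ast})^{\mathbb Z_6}\cong\mathbb C^2$.
   Context: Let $\theta\in\mathbb R\setminus\mathbb Q$, $\lambda=e^{2\pi i\theta}$, $\lambda^s:=e^{2\pi i\theta s}$. $\mathcal A_\theta^{alg}$ is the complex algebra of finite sums $\sum a_{n,m}U_1^nU_2^m$ with $U_1,U_2$ invertible and $U_2U_1=\lambda U_1U_2$; formal series $\sum_{(n,m)\in\mathbb Z^2}\varphi_{n,m}U_1^nU_2^m$ with arbitrary coefficients form an $\mathcal A_\theta^{alg}$-bimodule via multiplication. Termwise action of an automorphism $h$: $h\cdot\sum\varphi_{n,m}U_1^nU_2^m=\sum\varphi_{n,m}\,h\cdot(U_1^nU_2^m)$. *)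

theory Defs
  imports Complex_Main
begin

(* Coefficient functions indexed by (n,m) \<in> \<int>\<^sup>2 represent sum phi(n,m) U1^n U2^m.
   Elements of A_theta^alg: finitely supported ones; formal series: arbitrary ones. *)
type_synonym coeffs = "int \<times> int \<Rightarrow> complex"

definition lam :: "real \<Rightarrow> real \<Rightarrow> complex" where
  "lam \<theta> s = exp (complex_of_real (2 * pi * \<theta> * s) * \<i>)"

definition supp :: "coeffs \<Rightarrow> (int \<times> int) set" where
  "supp a = {k. a k \<noteq> 0}"

definition isalg :: "coeffs \<Rightarrow> bool" where
  "isalg a \<longleftrightarrow> finite (supp a)"

definition psub :: "int \<times> int \<Rightarrow> int \<times> int \<Rightarrow> int \<times> int" where
  "psub k p = (fst k - fst p, snd k - snd p)"

(* (U1^n U2^m)(U1^p U2^q) = lam^(m p) U1^(n+p) U2^(m+q), from U2 U1 = lam U1 U2 *)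
definition lmul :: "real \<Rightarrow> coeffs \<Rightarrow> coeffs \<Rightarrow> coeffs" where
  "lmul \<theta> a \<phi> k = (\<Sum>p\<in>supp a. a p * \<phi> (psub k p) * lam \<theta> (of_int (snd p * fst (psub k p))))"

definition rmul :: "real \<Rightarrow> coeffs \<Rightarrow> coeffs \<Rightarrow> coeffs" where
  "rmul \<theta> \<phi> a k = (\<Sum>q\<in>supp a. \<phi> (psub k q) * a q * lam \<theta> (of_int (snd (psub k q) * fst q)))"

definition mono :: "int \<times> int \<Rightarrow> coeffs" where
  "mono p = (\<lambda>k. if k = p then 1 else 0)"

definition aone :: coeffs where "aone = mono (0, 0)"

definition aneg :: "coeffs \<Rightarrow> coeffs" where
  "aneg a k = a (- fst k, - snd k)"

fun npow :: "real \<Rightarrow> coeffs \<Rightarrow> nat \<Rightarrow> coeffs" where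
  "npow \<theta> x 0 = aone"
| "npow \<theta> x (Suc n) = lmul \<theta> (npow \<theta> x n) x"

definition ainv :: "real \<Rightarrow> coeffs \<Rightarrow> coeffs" where
  "ainv \<theta> x = (THE y. isalg y \<and> lmul \<theta> x y = aone \<and> lmul \<theta> y x = aone)"

definition zpow :: "real \<Rightarrow> coeffs \<Rightarrow> int \<Rightarrow> coeffs" where
  "zpow \<theta> x k = (if 0 \<le> k then npow \<theta> x (nat k) else npow \<theta> (ainv \<theta> x) (nat (- k)))"

definition momega_U1 :: coeffs where "momega_U1 = mono (0, 1)"

definition momega_U2 :: "real \<Rightarrow> coeffs" where
  "momega_U2 \<theta> = (\<lambda>k. lam \<theta> (- 1 / 2) * lmul \<theta> (mono (-1, 0)) (mono (0, 1)) k)"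

definition momega_mono :: "real \<Rightarrow> int \<times> int \<Rightarrow> coeffs" where
  "momega_mono \<theta> p = lmul \<theta> (zpow \<theta> momega_U1 (fst p)) (zpow \<theta> (momega_U2 \<theta>) (snd p))"

(* termwise action of an automorphism h (given on monomials) on a formal series;
   each coefficient only receives contributions from finitely many monomials *)
definition termwise :: "(int \<times> int \<Rightarrow> coeffs) \<Rightarrow> coeffs \<Rightarrow> coeffs" where
  "termwise h \<phi> k = (\<Sum>p\<in>{p. h p k \<noteq> 0}. \<phi> p * h p k)"

definition H0neg :: "real \<Rightarrow> coeffs set" where
  "H0neg \<theta> = {\<phi>. \<forall>a. isalg a \<longrightarrow> lmul \<theta> (aneg a) \<phi> = rmul \<theta> \<phi> a}"

end

theory Submission
  imports Defs
begin

lemma lam_add: "lam t (a + b) = lam t a * lam t b"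
  unfolding lam_def by (simp add: distrib_left distrib_right exp_add[symmetric])

lemma lam_nz: "lam t a \<noteq> 0" unfolding lam_def by simp

lemma lam_0[simp]: "lam t 0 = 1" unfolding lam_def by simp

lemma lam_prod_eq: "a + b = c + d \<Longrightarrow> lam t a * lam t b = lam t c * lam t d"
  by (metis lam_add)

lemma lam_prod3_eq: "a + b + c = d \<Longrightarrow> lam t a * lam t b * lam t c = lam t d"
  by (metis lam_add)

lemma lam_inv: "inverse (lam t a) = lam t (- a)"
  by (metis lam_add lam_0 add.right_inverse lam_nz inverse_unique)

definition sm :: "complex \<Rightarrow> int \<times> int \<Rightarrow> coeffs" where
  "sm c p = (\<lambda>k. if k = p then c else 0)"

lemma mono_sm: "mono p = sm 1 p" unfolding mono_def sm_def by simp
lemma aone_sm: "aone = sm 1 (0,0)" unfolding aone_def mono_sm ..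

lemma supp_sm: "c \<noteq> 0 \<Longrightarrow> supp (sm c p) = {p}"
  unfolding supp_def sm_def by auto

lemma lmul_sm: "c \<noteq> 0 \<Longrightarrow> lmul t (sm c p) \<phi> k =
   c * \<phi> (fst k - fst p, snd k - snd p) * lam t (of_int (snd p * (fst k - fst p)))"
  unfolding lmul_def supp_sm by (simp add: sm_def psub_def)

lemma rmul_sm: "c \<noteq> 0 \<Longrightarrow> rmul t \<phi> (sm c q) k =
   \<phi> (fst k - fst q, snd k - snd q) * c * lam t (of_int ((snd k - snd q) * fst q))"
  unfolding rmul_def supp_sm by (simp add: sm_def psub_def)

lemma lmul_sm_sm: "c \<noteq> 0 \<Longrightarrow> lmul t (sm c p) (sm d q) =
   sm (c * d * lam t (of_int (snd p * fst q))) (fst p + fst q, snd p + snd q)"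
proof
  fix k
  assume c: "c \<noteq> 0"
  show "lmul t (sm c p) (sm d q) k = sm (c * d * lam t (of_int (snd p * fst q))) (fst p + fst q, snd p + snd q) k"
    unfolding lmul_sm[OF c] by (cases k; cases p; cases q; auto simp: sm_def)
qed


lemma momega_U2_sm: "momega_U2 t = sm (lam t (-1/2)) (-1, 1)"
  unfolding momega_U2_def mono_sm lmul_sm_sm[OF one_neq_zero]
  by (auto simp: sm_def)

lemma npowA: "npow t (sm 1 (0, e)) n = sm 1 (0, e * int n)"
  by (induction n) (auto simp: aone_sm lmul_sm_sm algebra_simps)

lemma npowB: "npow t (sm (lam t (-1/2)) (-s, s)) n = sm (lam t (- (real n)\<^sup>2 / 2)) (- s * int n, s * int n)"
  if "s = 1 \<or> s = -1"
proof (induction n)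
  case 0 then show ?case by (simp add: aone_sm)
next
  case (Suc n)
  have ph: "lam t (- (real n)\<^sup>2 / 2) * lam t (- 1 / 2) * lam t (real_of_int (s * int n * - s)) =
    lam t (- (1 + real n)\<^sup>2 / 2)"
    apply (rule lam_prod3_eq) using that by (auto simp: power2_eq_square algebra_simps)
  show ?case using Suc ph by (simp add: lmul_sm_sm lam_nz algebra_simps)
qed

lemma ainv_sm: "c \<noteq> 0 \<Longrightarrow> ainv t (sm c v) = sm (inverse c * lam t (of_int (fst v * snd v))) (- fst v, - snd v)"
  unfolding ainv_def
proof (rule the_equality)
  assume c: "c \<noteq> 0"
  let ?e = "inverse c * lam t (of_int (fst v * snd v))"
  have e: "?e \<noteq> 0" using c lam_nz by simp
  have ph: "c * ?e * lam t (of_int (snd v * - fst v)) = 1"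
  proof -
    have "lam t (of_int (fst v * snd v)) * lam t (of_int (snd v * - fst v)) = lam t 0 * lam t 0"
      by (rule lam_prod_eq) simp
    then show ?thesis using c by (simp add: field_simps)
  qed
  have ph2: "?e * c * lam t (of_int (- snd v * fst v)) = 1"
    using ph by (simp add: algebra_simps)
  show "isalg (sm ?e (- fst v, - snd v)) \<and> lmul t (sm c v) (sm ?e (- fst v, - snd v)) = aone \<and>
        lmul t (sm ?e (- fst v, - snd v)) (sm c v) = aone"
    unfolding isalg_def supp_sm[OF e] aone_sm lmul_sm_sm[OF c] lmul_sm_sm[OF e]
    using ph ph2 by simp
  fix y assume y: "isalg y \<and> lmul t (sm c v) y = aone \<and> lmul t y (sm c v) = aone"
  show "y = sm ?e (- fst v, - snd v)"
  proof
    fix k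
    have "lmul t (sm c v) y (fst k + fst v, snd k + snd v) = aone (fst k + fst v, snd k + snd v)"
      using y by simp
    then have h: "c * y k * lam t (of_int (snd v * fst k)) = (if k = (- fst v, - snd v) then 1 else 0)"
      unfolding lmul_sm[OF c] aone_sm by (cases k; auto simp: sm_def)
    show "y k = sm ?e (- fst v, - snd v) k"
    proof (cases "k = (- fst v, - snd v)")
      case True
      then have "(c * lam t (of_int (snd v * fst k))) * y k = 1"
        using h by (simp add: algebra_simps)
      then have "y k = inverse (c * lam t (of_int (snd v * fst k)))"
        by (metis inverse_unique)
      also have "\<dots> = ?e" using True
        by (simp add: lam_inv mult.commute)
      finally show ?thesis using True by (simp add: sm_def)
    next
      case False
      then show ?thesis using h c lam_nz by (simp add: sm_def)
    qed
  qed
qed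


lemma zpowU1: "zpow t momega_U1 k = sm 1 (0, k)"
proof (cases "0 \<le> k")
  case True
  then show ?thesis unfolding zpow_def momega_U1_def mono_sm using npowA[of t 1 "nat k"] by simp
next
  case False
  have "ainv t (sm 1 (0, 1)) = sm 1 (0, -1)" by (simp add: ainv_sm)
  then show ?thesis unfolding zpow_def momega_U1_def mono_sm using False npowA[of t "-1" "nat (-k)"] by simp
qed

lemma zpowU2: "zpow t (momega_U2 t) m = sm (lam t (- (of_int m)\<^sup>2 / 2)) (- m, m)"
proof (cases "0 \<le> m")
  case True
  have "momega_U2 t = sm (lam t (-1/2)) (- 1, 1)" by (rule momega_U2_sm)
  then show ?thesis unfolding zpow_def using True npowB[of 1 t "nat m"] by simp
next
  case False
  have "ainv t (momega_U2 t) = sm (inverse (lam t (-1/2)) * lam t (-1)) (1, -1)"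
    unfolding momega_U2_sm by (simp add: ainv_sm lam_nz)
  also have "inverse (lam t (-1/2)) * lam t (-1) = lam t (-1/2)"
    unfolding lam_inv by (rule lam_prod_eq[where d = 0, simplified]) simp
  finally have "ainv t (momega_U2 t) = sm (lam t (- 1 / 2)) (- (- 1), - 1)" by simp
  then show ?thesis unfolding zpow_def using False npowB[of "-1" t "nat (-m)"] by simp
qed

definition Tm :: "int \<times> int \<Rightarrow> int \<times> int" where "Tm p = (- snd p, fst p + snd p)"
definition Ti :: "int \<times> int \<Rightarrow> int \<times> int" where "Ti k = (fst k + snd k, - fst k)"
definition sg :: "real \<Rightarrow> int \<times> int \<Rightarrow> complex" where
  "sg t p = lam t (- (of_int (snd p))\<^sup>2 / 2) * lam t (of_int (fst p * - snd p))"

lemma sg_nz: "sg t p \<noteq> 0" unfolding sg_def by (simp add: lam_nz)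

lemma momega_mono_sm: "momega_mono t p = sm (sg t p) (Tm p)"
  unfolding momega_mono_def zpowU1 zpowU2 lmul_sm_sm[OF one_neq_zero] sg_def Tm_def by simp

lemma termwise_eq: "termwise (momega_mono t) \<phi> k = \<phi> (Ti k) * sg t (Ti k)"
proof -
  have "{p. momega_mono t p k \<noteq> 0} = {Ti k}"
    unfolding momega_mono_sm using sg_nz
    by (auto simp: sm_def Tm_def Ti_def)
  then show ?thesis unfolding termwise_def momega_mono_sm
    by (simp add: sm_def Tm_def Ti_def)
qed


definition HC :: "real \<Rightarrow> coeffs \<Rightarrow> bool" where
  "HC t \<phi> \<longleftrightarrow> (\<forall>k1 k2 q1 q2. \<phi> (k1 + q1, k2 + q2) * lam t (of_int (- q2 * (k1 + q1))) =
      \<phi> (k1 - q1, k2 - q2) * lam t (of_int ((k2 - q2) * q1)))"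

lemma aneg_sm: "aneg (sm c q) = sm c (- fst q, - snd q)"
  unfolding aneg_def sm_def by (auto simp: fun_eq_iff)

lemma H0neg_iff: "\<phi> \<in> H0neg t \<longleftrightarrow> HC t \<phi>"
proof
  assume h: "\<phi> \<in> H0neg t"
  show "HC t \<phi>" unfolding HC_def
  proof (intro allI)
    fix k1 k2 q1 q2 :: int
    have "isalg (sm 1 (q1, q2))" unfolding isalg_def by (simp add: supp_sm)
    then have "lmul t (aneg (sm 1 (q1, q2))) \<phi> (k1, k2) = rmul t \<phi> (sm 1 (q1, q2)) (k1, k2)"
      using h unfolding H0neg_def by simp
    then show "\<phi> (k1 + q1, k2 + q2) * lam t (of_int (- q2 * (k1 + q1))) =
      \<phi> (k1 - q1, k2 - q2) * lam t (of_int ((k2 - q2) * q1))"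
      unfolding aneg_sm lmul_sm[OF one_neq_zero] rmul_sm[OF one_neq_zero] by simp
  qed
next
  assume h: "HC t \<phi>"
  show "\<phi> \<in> H0neg t" unfolding H0neg_def
  proof (intro CollectI allI impI ext)
    fix a k assume "isalg a"
    let ?n = "\<lambda>q::int\<times>int. (- fst q, - snd q)"
    have s: "supp (aneg a) = ?n ` supp a"
      unfolding supp_def aneg_def by (force simp: image_iff)
    have i: "inj_on ?n (supp a)" by (auto simp: inj_on_def)
    have "lmul t (aneg a) \<phi> k = (\<Sum>q\<in>supp a. a q * \<phi> (psub k (?n q)) * lam t (of_int (snd (?n q) * fst (psub k (?n q)))))"
      unfolding lmul_def s sum.reindex[OF i] by (simp add: aneg_def)
    also have "\<dots> = (\<Sum>q\<in>supp a. \<phi> (psub k q) * a q * lam t (of_int (snd (psub k q) * fst q)))"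
    proof (rule sum.cong[OF refl])
      fix q
      have "\<phi> (fst k + fst q, snd k + snd q) * lam t (of_int (- snd q * (fst k + fst q))) =
        \<phi> (fst k - fst q, snd k - snd q) * lam t (of_int ((snd k - snd q) * fst q))"
        using h unfolding HC_def by blast
      then show "a q * \<phi> (psub k (?n q)) * lam t (of_int (snd (?n q) * fst (psub k (?n q)))) =
          \<phi> (psub k q) * a q * lam t (of_int (snd (psub k q) * fst q))"
        unfolding psub_def by (simp add: algebra_simps)
    qed
    also have "\<dots> = rmul t \<phi> a k" unfolding rmul_def ..
    finally show "lmul t (aneg a) \<phi> k = rmul t \<phi> a k" .
  qed
qed


definition ph :: "real \<Rightarrow> int \<times> int \<Rightarrow> complex" where
  "ph t k = lam t (of_int (fst k * snd k) / 2)"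

lemma ph_nz: "ph t k \<noteq> 0" unfolding ph_def by (simp add: lam_nz)

lemma HC_chi: "HC t (\<lambda>k. ph t k * \<chi> k) \<longleftrightarrow>
   (\<forall>k1 k2 q1 q2. \<chi> (k1 + q1, k2 + q2) = \<chi> (k1 - q1, k2 - q2))"
proof -
  have eq: "ph t (k1 + q1, k2 + q2) * \<chi> (k1 + q1, k2 + q2) * lam t (of_int (- q2 * (k1 + q1))) =
      ph t (k1 - q1, k2 - q2) * \<chi> (k1 - q1, k2 - q2) * lam t (of_int ((k2 - q2) * q1))
     \<longleftrightarrow> \<chi> (k1 + q1, k2 + q2) = \<chi> (k1 - q1, k2 - q2)" for k1 k2 q1 q2
  proof -
    let ?P = "ph t (k1 + q1, k2 + q2) * lam t (of_int (- q2 * (k1 + q1)))"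
    have P: "?P = ph t (k1 - q1, k2 - q2) * lam t (of_int ((k2 - q2) * q1))"
      unfolding ph_def by (rule lam_prod_eq) (simp add: field_simps)
    have nz: "?P \<noteq> 0" by (simp add: ph_nz lam_nz)
    have l: "ph t (k1 + q1, k2 + q2) * \<chi> (k1 + q1, k2 + q2) * lam t (of_int (- q2 * (k1 + q1))) = ?P * \<chi> (k1 + q1, k2 + q2)"
      by (simp only: ac_simps)
    have r: "ph t (k1 - q1, k2 - q2) * \<chi> (k1 - q1, k2 - q2) * lam t (of_int ((k2 - q2) * q1)) = (ph t (k1 - q1, k2 - q2) * lam t (of_int ((k2 - q2) * q1))) * \<chi> (k1 - q1, k2 - q2)"
      by (simp only: ac_simps)
    show ?thesis unfolding l r P[symmetric] using nz by simp
  qed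
  show ?thesis unfolding HC_def using eq by simp
qed

lemma TiTm[simp]: "Ti (Tm p) = p" and TmTi[simp]: "Tm (Ti k) = k"
  by (auto simp: Ti_def Tm_def)

lemma inv_iff: "termwise (momega_mono t) \<phi> = \<phi> \<longleftrightarrow> (\<forall>p. \<phi> p * sg t p = \<phi> (Tm p))"
proof
  assume h: "termwise (momega_mono t) \<phi> = \<phi>"
  show "\<forall>p. \<phi> p * sg t p = \<phi> (Tm p)"
  proof
    fix p show "\<phi> p * sg t p = \<phi> (Tm p)" using termwise_eq[of t \<phi> "Tm p"] h by simp
  qed
next
  assume h: "\<forall>p. \<phi> p * sg t p = \<phi> (Tm p)"
  show "termwise (momega_mono t) \<phi> = \<phi>"
  proof
    fix k show "termwise (momega_mono t) \<phi> k = \<phi> k" unfolding termwise_eq using h[rule_format, of "Ti k"] by simp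
  qed
qed

lemma inv_chi: "(\<forall>p. ph t p * \<chi> p * sg t p = ph t (Tm p) * \<chi> (Tm p)) \<longleftrightarrow> (\<forall>p. \<chi> p = \<chi> (Tm p))"
proof -
  have P: "ph t p * sg t p = ph t (Tm p)" for p
    unfolding ph_def sg_def Tm_def
    by (simp add: lam_add[symmetric] mult.assoc[symmetric]) (rule arg_cong[where f="lam t"]; simp add: power2_eq_square algebra_simps)
  have "ph t p * \<chi> p * sg t p = ph t (Tm p) * \<chi> (Tm p) \<longleftrightarrow> \<chi> p = \<chi> (Tm p)" for p
  proof -
    have e: "ph t p * \<chi> p * sg t p = ph t (Tm p) * \<chi> p" using P[of p] by (simp add: algebra_simps)
    show ?thesis unfolding e using ph_nz[of t "Tm p"] by simp
  qed
  then show ?thesis by simp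
qed


definition EE :: "int \<times> int \<Rightarrow> bool" where "EE k \<longleftrightarrow> even (fst k) \<and> even (snd k)"

lemma memS: "(\<lambda>k. ph t k * \<chi> k) \<in> {\<phi> \<in> H0neg t. termwise (momega_mono t) \<phi> = \<phi>} \<longleftrightarrow>
   (\<forall>k1 k2 q1 q2. \<chi> (k1 + q1, k2 + q2) = \<chi> (k1 - q1, k2 - q2)) \<and> (\<forall>p. \<chi> p = \<chi> (Tm p))"
  unfolding mem_Collect_eq H0neg_iff HC_chi inv_iff by (simp only: inv_chi)

lemma char: "((\<forall>k1 k2 q1 q2. \<chi> (k1 + q1, k2 + q2) = \<chi> (k1 - q1, k2 - q2)) \<and> (\<forall>p. \<chi> p = \<chi> (Tm p)))
   \<longleftrightarrow> (\<forall>k. \<chi> k = (if EE k then \<chi> (0, 0) else \<chi> (1, 0)))"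
proof
  assume "(\<forall>k1 k2 q1 q2. \<chi> (k1 + q1, k2 + q2) = \<chi> (k1 - q1, k2 - q2)) \<and> (\<forall>p. \<chi> p = \<chi> (Tm p))"
  then have c1: "\<And>k1 k2 q1 q2. \<chi> (k1 + q1, k2 + q2) = \<chi> (k1 - q1, k2 - q2)"
    and c2: "\<And>p. \<chi> p = \<chi> (Tm p)" by blast+
  have red: "\<chi> (j1, j2) = \<chi> (j1 mod 2, j2 mod 2)" for j1 j2
  proof -
    have "\<chi> ((j1 - j1 div 2) + j1 div 2, (j2 - j2 div 2) + j2 div 2) =
          \<chi> ((j1 - j1 div 2) - j1 div 2, (j2 - j2 div 2) - j2 div 2)" by (rule c1)
    moreover have "(j1 - j1 div 2) - j1 div 2 = j1 mod 2" by (simp add: minus_div_mult_eq_mod[symmetric])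
    moreover have "(j2 - j2 div 2) - j2 div 2 = j2 mod 2" by (simp add: minus_div_mult_eq_mod[symmetric])
    ultimately show ?thesis by simp
  qed
  have a: "\<chi> (0, 1) = \<chi> (1, 0)" using c2[of "(1, 0)"] by (simp add: Tm_def)
  have b: "\<chi> (1, 1) = \<chi> (1, 0)" using c2[of "(0, 1)"] red[of "-1" 1] a by (simp add: Tm_def)
  show "\<forall>k. \<chi> k = (if EE k then \<chi> (0, 0) else \<chi> (1, 0))"
  proof
    fix k :: "int \<times> int"
    obtain j1 j2 where k: "k = (j1, j2)" by (cases k)
    have m1: "j1 mod 2 = 0 \<or> j1 mod 2 = 1" and m2: "j2 mod 2 = 0 \<or> j2 mod 2 = 1" by auto
    show "\<chi> k = (if EE k then \<chi> (0, 0) else \<chi> (1, 0))"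
      unfolding k red[of j1 j2] EE_def using m1 m2 a b
      by (auto simp: even_iff_mod_2_eq_zero)
  qed
next
  assume h: "\<forall>k. \<chi> k = (if EE k then \<chi> (0, 0) else \<chi> (1, 0))"
  have e1: "EE (k1 + q1, k2 + q2) \<longleftrightarrow> EE (k1 - q1, k2 - q2)" for k1 k2 q1 q2 :: int
    unfolding EE_def by simp
  have e2: "EE (Tm p) \<longleftrightarrow> EE p" for p
    unfolding EE_def Tm_def by auto
  show "(\<forall>k1 k2 q1 q2. \<chi> (k1 + q1, k2 + q2) = \<chi> (k1 - q1, k2 - q2)) \<and> (\<forall>p. \<chi> p = \<chi> (Tm p))"
    using e1 e2 h by metis
qed

theorem mainTheorem11:
  fixes \<theta> :: real
  assumes "\<theta> \<notin> \<rat>"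
  shows "\<exists>\<psi>1 \<psi>2 :: coeffs.
           bij_betw (\<lambda>(x :: complex, y :: complex). (\<lambda>k. x * \<psi>1 k + y * \<psi>2 k))
             UNIV {\<phi> \<in> H0neg \<theta>. termwise (momega_mono \<theta>) \<phi> = \<phi>}"
proof (intro exI)
  let ?S = "{\<phi> \<in> H0neg \<theta>. termwise (momega_mono \<theta>) \<phi> = \<phi>}"
  let ?p1 = "\<lambda>k. if EE k then ph \<theta> k else 0"
  let ?p2 = "\<lambda>k. if EE k then 0 else ph \<theta> k"
  let ?F = "\<lambda>(x :: complex, y :: complex). (\<lambda>k. x * ?p1 k + y * ?p2 k)"
  have F: "?F (x, y) = (\<lambda>k. ph \<theta> k * (\<lambda>k. if EE k then x else y) k)" for x y
    by (auto simp: fun_eq_iff)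
  have ph00: "ph \<theta> (0, 0) = 1" and ph10: "ph \<theta> (1, 0) = 1" by (simp_all add: ph_def)
  have E00: "EE (0, 0)" and E10: "\<not> EE (1, 0)" by (simp_all add: EE_def)
  show "bij_betw ?F UNIV ?S"
    unfolding bij_betw_def
  proof (intro conjI)
    show "inj_on ?F UNIV"
    proof (rule inj_onI)
      fix a b :: "complex \<times> complex" assume "?F a = ?F b"
      then have "?F a (0, 0) = ?F b (0, 0)" "?F a (1, 0) = ?F b (1, 0)" by simp_all
      then show "a = b" using ph00 ph10 E00 E10 by (cases a; cases b) simp
    qed
    show "?F ` UNIV = ?S"
    proof
      show "?F ` UNIV \<subseteq> ?S"
      proof
        fix \<phi> assume "\<phi> \<in> ?F ` UNIV"
        then obtain x y where \<phi>: "\<phi> = ?F (x, y)" by auto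
        let ?c = "\<lambda>k. if EE k then x else y"
        have "\<forall>k. ?c k = (if EE k then ?c (0, 0) else ?c (1, 0))" using E00 E10 by simp
        then show "\<phi> \<in> ?S" unfolding \<phi> F using memS[of \<theta> ?c] char[of ?c] by blast
      qed
      show "?S \<subseteq> ?F ` UNIV"
      proof
        fix \<phi> assume \<phi>S: "\<phi> \<in> ?S"
        define \<chi> where "\<chi> k = \<phi> k * lam \<theta> (- (of_int (fst k * snd k)) / 2)" for k
        have \<phi>eq: "\<phi> = (\<lambda>k. ph \<theta> k * \<chi> k)"
        proof
          fix k
          have "ph \<theta> k * lam \<theta> (- (of_int (fst k * snd k)) / 2) = lam \<theta> 0 * lam \<theta> 0"
            unfolding ph_def by (rule lam_prod_eq) simp
          then show "\<phi> k = ph \<theta> k * \<chi> k" unfolding \<chi>_def by (simp add: algebra_simps)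
        qed
        have "\<forall>k. \<chi> k = (if EE k then \<chi> (0, 0) else \<chi> (1, 0))"
          using \<phi>S memS[of \<theta> \<chi>] char[of \<chi>] unfolding \<phi>eq by blast
        then have "\<phi> = ?F (\<chi> (0, 0), \<chi> (1, 0))"
          unfolding F \<phi>eq by (simp add: fun_eq_iff)
        then show "\<phi> \<in> ?F ` UNIV" by blast
      qed
    qed
  qed
qed

end
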